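(* Let $\widehat{\mathbf Y}$ be an optimal solution of the SDP, $\gamma=\|\widehat{\mathbf Y}-\mathbf Y^*\|_1$, and $S_4=\langle\widehat{\mathbf Y}-\mathbf Y^*,\mathbb E\,\mathbf H\mathbf H^\top\rangle$. For $a,b\in[k]$ let $T_{ab}=\sum_{i\in C^*_a,\,j\in C^*_b}(\widehat{\mathbf Y}-\mathbf Y^* )_{ij}$. Then \[ S_4=-\frac12\sum_{a\ne b}T_{ab}\Delta_{ab}^2\le-\frac14\Delta^2\gamma. \]
   Context: Model: integers $n\ge 4$, $k\ge 2$ with $k\mid n$; centers $\boldsymbol\mu_1,\dots,\boldsymbol\mu_k\in\mathbb R^d$; labels $\sigma^*:[n]\to[k]$ with clusters $C^*_a=\{i:\sigma^*(i)=a\}$ of size $n/k$; observations $\mathbf h_i=\boldsymbol\mu_{\sigma^*(i)}+\mathbf g_i$ with $\mathbf g_i$ independent, mean-zero sub-Gaussian random vectors. $\mathbf H\in\mathbb R^{n\times d}$ has $i$-th row $\mathbf h_i^\top$. $\Delta_{ab}=\|\boldsymbol\mu_a-\boldsymbol\mu_b\|_2$, $\Delta=\min_{a\ne b}\Delta_{ab}$. SDP: $A_{ij}=\|\mathbf h_i-\mathbf h_j\|_2^2$; $\widehat{\mathbf Y}$ minimizes $\langle\mathbf Y,\mathbf A\rangle$ subject to $\mathbf Y\mathbf 1_n=\frac nk\mathbf 1_n$, $\mathbf Y\succeq0$, $\mathrm{diag}(\mathbf Y)=\mathbf 1_n$, $\mathbf Y\ge0$. $Y^*_{ij}=\mathbb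 1\{\sigma^*(i)=\sigma^*(j)\}$; $\|\cdot\|_1$ entrywise $\ell_1$ norm. *)

theory Defs
  imports "HOL-Probability.Probability"
begin

text \<open>Indices: points are 0..<n, clusters are 0..<k. Matrices are functions
  nat => nat => real, only entries with indices below n matter.\<close>

definition subgaussian_vec :: "'a measure \<Rightarrow> ('a \<Rightarrow> real^'d) \<Rightarrow> bool" where
  "subgaussian_vec M X \<longleftrightarrow> (\<exists>K::real. \<forall>u::real^'d. norm u = 1 \<longrightarrow>
      (\<forall>l::real. integrable M (\<lambda>w. exp (l * (u \<bullet> X w))) \<and>
          (\<integral>w. exp (l * (u \<bullet> X w)) \<partial>M) \<le> exp (l\<^sup>2 * K\<^sup>2 / 2)))"

definition psd_mat :: "nat \<Rightarrow> (nat \<Rightarrow> nat \<Rightarrow> real) \<Rightarrow> bool" where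
  "psd_mat n Y \<longleftrightarrow> (\<forall>i<n. \<forall>j<n. Y i j = Y j i) \<and>
     (\<forall>x::nat \<Rightarrow> real. 0 \<le> (\<Sum>i<n. \<Sum>j<n. x i * Y i j * x j))"

definition sdp_feasible :: "nat \<Rightarrow> nat \<Rightarrow> (nat \<Rightarrow> nat \<Rightarrow> real) \<Rightarrow> bool" where
  "sdp_feasible n k Y \<longleftrightarrow>
     (\<forall>i<n. (\<Sum>j<n. Y i j) = real n / real k) \<and> psd_mat n Y \<and>
     (\<forall>i<n. Y i i = 1) \<and> (\<forall>i<n. \<forall>j<n. 0 \<le> Y i j)"

definition mat_inner :: "nat \<Rightarrow> (nat \<Rightarrow> nat \<Rightarrow> real) \<Rightarrow> (nat \<Rightarrow> nat \<Rightarrow> real) \<Rightarrow> real" where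
  "mat_inner n X Z = (\<Sum>i<n. \<Sum>j<n. X i j * Z i j)"

definition sdp_optimal :: "nat \<Rightarrow> nat \<Rightarrow> (nat \<Rightarrow> nat \<Rightarrow> real) \<Rightarrow> (nat \<Rightarrow> nat \<Rightarrow> real) \<Rightarrow> bool" where
  "sdp_optimal n k A Y \<longleftrightarrow> sdp_feasible n k Y \<and>
     (\<forall>Y'. sdp_feasible n k Y' \<longrightarrow> mat_inner n Y A \<le> mat_inner n Y' A)"

end

theory Submission
  imports Defs
begin
lemma EHH_offdiag:
  fixes M :: "'w measure" and g :: "nat \<Rightarrow> 'w \<Rightarrow> real^'d" and a b :: "real^'d"
  assumes "prob_space M" "prob_space.indep_vars M (\<lambda>_. borel) g I" "i \<in> I" "j \<in> I" "i \<noteq> j"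
   "integrable M (g i)" "integrable M (g j)" "(\<integral>w. g i w \<partial>M) = 0" "(\<integral>w. g j w \<partial>M) = 0"
  shows "(\<integral>w. (a + g i w) \<bullet> (b + g j w) \<partial>M) = a \<bullet> b"
proof -
  interpret prob_space M by fact
  have ind2: "indep_vars (\<lambda>_. borel) g {i,j}" using indep_vars_subset[OF assms(2)] assms(3,4) by auto
  have prodc: "integrable M (\<lambda>w. g i w $ c * g j w $ c) \<and> (\<integral>w. g i w $ c * g j w $ c \<partial>M) = 0" for c
  proof -
    have iv: "indep_vars (\<lambda>_. borel) (\<lambda>l w. g l w $ c) {i,j}"
      by (rule indep_vars_compose2[OF ind2]) auto
    have ii: "\<And>l. l \<in> {i,j} \<Longrightarrow> integrable M (\<lambda>w. g l w $ c)"
    proof -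
      fix l assume "l \<in> {i,j}"
      hence "integrable M (g l)" using assms by auto
      hence "integrable M (\<lambda>w. g l w \<bullet> axis c 1)" by auto
      thus "integrable M (\<lambda>w. g l w $ c)" by (simp add: inner_axis)
    qed
    have z: "\<And>l. l \<in> {i,j} \<Longrightarrow> (\<integral>w. g l w $ c \<partial>M) = 0"
    proof -
      fix l assume "l \<in> {i,j}"
      hence "integrable M (g l)" "(\<integral>w. g l w \<partial>M) = 0" using assms by auto
      hence "(\<integral>w. g l w \<bullet> axis c 1 \<partial>M) = 0" by simp
      thus "(\<integral>w. g l w $ c \<partial>M) = 0" by (simp add: inner_axis)
    qed
    have "integrable M (\<lambda>w. \<Prod>l\<in>{i,j}. g l w $ c)"
      by (rule indep_vars_integrable[OF _ iv ii]) auto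
    moreover have "(\<integral>w. (\<Prod>l\<in>{i,j}. g l w $ c) \<partial>M) = (\<Prod>l\<in>{i,j}. \<integral>w. g l w $ c \<partial>M)"
      by (rule indep_vars_lebesgue_integral[OF _ iv ii]) auto
    ultimately show ?thesis using assms(5) z by simp
  qed
  have gg: "integrable M (\<lambda>w. g i w \<bullet> g j w) \<and> (\<integral>w. g i w \<bullet> g j w \<partial>M) = 0"
  proof -
    have e: "(\<lambda>w. g i w \<bullet> g j w) = (\<lambda>w. \<Sum>c\<in>UNIV. g i w $ c * g j w $ c)"
      by (simp add: inner_vec_def)
    show ?thesis unfolding e using prodc by (simp add: integral_sum)
  qed
  have ex: "(\<lambda>w. (a + g i w) \<bullet> (b + g j w)) = (\<lambda>w. a \<bullet> b + (a \<bullet> g j w + (g i w \<bullet> b + g i w \<bullet> g j w)))"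
    by (simp add: inner_add_left inner_add_right algebra_simps)
  have i1: "integrable M (\<lambda>w. a \<bullet> g j w)" using assms(7) by auto
  have i2: "integrable M (\<lambda>w. g i w \<bullet> b)" using assms(6) by auto
  have v1: "(\<integral>w. a \<bullet> g j w \<partial>M) = 0" using assms(7,9) by simp
  have v2: "(\<integral>w. g i w \<bullet> b \<partial>M) = 0" using assms(6,8) by simp
  have "(\<integral>w. a \<bullet> b + (a \<bullet> g j w + (g i w \<bullet> b + g i w \<bullet> g j w)) \<partial>M)
     = (\<integral>w. a \<bullet> b \<partial>M) + ((\<integral>w. a \<bullet> g j w \<partial>M) + ((\<integral>w. g i w \<bullet> b \<partial>M) + (\<integral>w. g i w \<bullet> g j w \<partial>M)))"
    using i1 i2 gg by (simp add: integral_add)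
  then show ?thesis unfolding ex using gg v1 v2 by (simp add: prob_space)
qed

lemma sum_partition2:
  fixes f :: "nat \<Rightarrow> nat \<Rightarrow> real" and \<sigma> :: "nat \<Rightarrow> nat" and n k :: nat
  assumes "\<forall>i<n. \<sigma> i < k"
  shows "(\<Sum>i<n. \<Sum>j<n. f i j) = (\<Sum>a<k. \<Sum>b<k. \<Sum>i\<in>{i. i < n \<and> \<sigma> i = a}. \<Sum>j\<in>{j. j < n \<and> \<sigma> j = b}. f i j)"
proof -
  have g: "\<And>h::nat\<Rightarrow>real. (\<Sum>i<n. h i) = (\<Sum>a<k. \<Sum>i\<in>{i. i < n \<and> \<sigma> i = a}. h i)"
  proof -
    fix h :: "nat \<Rightarrow> real"
    have "(\<Sum>a<k. \<Sum>i\<in>{x\<in>{..<n}. \<sigma> x = a}. h i) = (\<Sum>i<n. h i)"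
      by (rule sum.group) (use assms in auto)
    moreover have "\<And>a. {x\<in>{..<n}. \<sigma> x = a} = {i. i < n \<and> \<sigma> i = a}" by auto
    ultimately show "(\<Sum>i<n. h i) = (\<Sum>a<k. \<Sum>i\<in>{i. i < n \<and> \<sigma> i = a}. h i)" by simp
  qed
  have "(\<Sum>i<n. \<Sum>j<n. f i j) = (\<Sum>i<n. \<Sum>b<k. \<Sum>j\<in>{j. j < n \<and> \<sigma> j = b}. f i j)"
    by (subst g) simp
  also have "\<dots> = (\<Sum>b<k. \<Sum>i<n. \<Sum>j\<in>{j. j < n \<and> \<sigma> j = b}. f i j)"
    by (rule sum.swap)
  also have "\<dots> = (\<Sum>b<k. \<Sum>a<k. \<Sum>i\<in>{i. i < n \<and> \<sigma> i = a}. \<Sum>j\<in>{j. j < n \<and> \<sigma> j = b}. f i j)"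
    by (subst g) simp
  also have "\<dots> = (\<Sum>a<k. \<Sum>b<k. \<Sum>i\<in>{i. i < n \<and> \<sigma> i = a}. \<Sum>j\<in>{j. j < n \<and> \<sigma> j = b}. f i j)"
    by (rule sum.swap)
  finally show ?thesis .
qed

theorem proposition9:
  fixes M :: "'w measure" and n k :: nat and \<mu> :: "nat \<Rightarrow> real^'d"
    and \<sigma> :: "nat \<Rightarrow> nat" and g :: "nat \<Rightarrow> 'w \<Rightarrow> real^'d"
    and \<omega> :: 'w and Yh :: "nat \<Rightarrow> nat \<Rightarrow> real"
  assumes "prob_space M"
    and "n \<ge> 4" and "k \<ge> 2" and "k dvd n"
    and "\<forall>i<n. \<sigma> i < k"
    and "\<forall>a<k. card {i. i < n \<and> \<sigma> i = a} = n div k"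
    and "\<forall>i<n. g i \<in> borel_measurable M"
    and "prob_space.indep_vars M (\<lambda>_. borel) g {..<n}"
    and "\<forall>i<n. integrable M (g i) \<and> (\<integral>w. g i w \<partial>M) = 0"
    and "\<forall>i<n. subgaussian_vec M (g i)"
    and "\<omega> \<in> space M"
    and "sdp_optimal n k (\<lambda>i j. (norm ((\<mu> (\<sigma> i) + g i \<omega>) - (\<mu> (\<sigma> j) + g j \<omega>)))\<^sup>2) Yh"
  shows
   "let Ystar = (\<lambda>i j. if \<sigma> i = \<sigma> j then 1 else 0 :: real);
        D = (\<lambda>i j. Yh i j - Ystar i j);
        \<gamma> = (\<Sum>i<n. \<Sum>j<n. \<bar>D i j\<bar>);
        EHH = (\<lambda>i j. \<integral>w. (\<mu> (\<sigma> i) + g i w) \<bullet> (\<mu> (\<sigma> j) + g j w) \<partial>M);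
        S4 = mat_inner n D EHH;
        T = (\<lambda>a b. \<Sum>i\<in>{i. i < n \<and> \<sigma> i = a}. \<Sum>j\<in>{j. j < n \<and> \<sigma> j = b}. D i j);
        Dab = (\<lambda>a b. dist (\<mu> a) (\<mu> b));
        Delta = Min {Dab a b | a b. a < k \<and> b < k \<and> a \<noteq> b}
    in S4 = - (1/2) * (\<Sum>a<k. \<Sum>b\<in>{b. b < k \<and> b \<noteq> a}. T a b * (Dab a b)\<^sup>2)
       \<and> - (1/2) * (\<Sum>a<k. \<Sum>b\<in>{b. b < k \<and> b \<noteq> a}. T a b * (Dab a b)\<^sup>2)
           \<le> - (1/4) * Delta\<^sup>2 * \<gamma>"
proof -
  note A = assms
  define Ystar where "Ystar = (\<lambda>i j. if \<sigma> i = \<sigma> j then 1 else 0 :: real)"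
  define D where "D = (\<lambda>i j. Yh i j - Ystar i j)"
  define \<gamma> where "\<gamma> = (\<Sum>i<n. \<Sum>j<n. \<bar>D i j\<bar>)"
  define EHH where "EHH = (\<lambda>i j. \<integral>w. (\<mu> (\<sigma> i) + g i w) \<bullet> (\<mu> (\<sigma> j) + g j w) \<partial>M)"
  define S4 where "S4 = mat_inner n D EHH"
  define T where "T = (\<lambda>a b. \<Sum>i\<in>{i. i < n \<and> \<sigma> i = a}. \<Sum>j\<in>{j. j < n \<and> \<sigma> j = b}. D i j)"
  define Dab where "Dab = (\<lambda>a b. dist (\<mu> a) (\<mu> b))"
  define Delta where "Delta = Min {Dab a b | a b. a < k \<and> b < k \<and> a \<noteq> b}"
  define X where "X = (\<Sum>a<k. \<Sum>b\<in>{b. b < k \<and> b \<noteq> a}. T a b * (Dab a b)\<^sup>2)"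
  have feas: "sdp_feasible n k Yh" using A(12) unfolding sdp_optimal_def by blast
  have rows: "\<And>i. i < n \<Longrightarrow> (\<Sum>j<n. Yh i j) = real n / real k"
   and sym: "\<And>i j. i < n \<Longrightarrow> j < n \<Longrightarrow> Yh i j = Yh j i"
   and diag: "\<And>i. i < n \<Longrightarrow> Yh i i = 1"
   and nonneg: "\<And>i j. i < n \<Longrightarrow> j < n \<Longrightarrow> 0 \<le> Yh i j"
   and psd: "\<And>x. 0 \<le> (\<Sum>i<n. \<Sum>j<n. x i * Yh i j * x j)"
    using feas unfolding sdp_feasible_def psd_mat_def by auto
  have le1: "Yh i j \<le> 1" if "i < n" "j < n" for i j
  proof (cases "i = j")
    case True then show ?thesis using diag that by simp
  next
    case False
    define x where "x = (\<lambda>l. if l = i then 1 else if l = j then -1 else 0::real)"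
    have "(\<Sum>l<n. \<Sum>m<n. x l * Yh l m * x m) = (\<Sum>l<n. x l * (x i * Yh l i + x j * Yh l j))"
    proof (rule sum.cong[OF refl])
      fix l assume "l \<in> {..<n}"
      have "(\<Sum>m<n. x l * Yh l m * x m) = (\<Sum>m\<in>{i,j}. x l * Yh l m * x m)"
        by (rule sum.mono_neutral_right) (use that in \<open>auto simp: x_def\<close>)
      then show "(\<Sum>m<n. x l * Yh l m * x m) = x l * (x i * Yh l i + x j * Yh l j)"
        using False by (simp add: algebra_simps)
    qed
    also have "\<dots> = (\<Sum>l\<in>{i,j}. x l * (x i * Yh l i + x j * Yh l j))"
      by (rule sum.mono_neutral_right) (use that in \<open>auto simp: x_def\<close>)
    also have "\<dots> = Yh i i + Yh j j - Yh i j - Yh j i"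
      using False by (simp add: x_def algebra_simps)
    finally have "0 \<le> Yh i i + Yh j j - Yh i j - Yh j i" using psd[of x] by simp
    then show ?thesis using diag sym that by simp
  qed
  have kpos: "k > 0" using A(3) by simp
  have cardC: "real (card {j. j < n \<and> \<sigma> j = \<sigma> i}) = real n / real k" if "i < n" for i
  proof -
    have "card {j. j < n \<and> \<sigma> j = \<sigma> i} = n div k" using A(5,6) that by auto
    moreover have "real (n div k) = real n / real k" using A(4) kpos by (simp add: real_of_nat_div)
    ultimately show ?thesis by simp
  qed
  have Ysrow: "(\<Sum>j<n. Ystar i j) = real n / real k" if "i < n" for i
  proof -
    have "(\<Sum>j<n. Ystar i j) = (\<Sum>j\<in>{j. j < n \<and> \<sigma> j = \<sigma> i}. 1)"
      unfolding Ystar_def by (rule sum.mono_neutral_cong_right) auto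
    then show ?thesis using cardC[OF that] by simp
  qed
  have Drow: "(\<Sum>j<n. D i j) = 0" if "i < n" for i
    using rows[OF that] Ysrow[OF that] unfolding D_def by (simp add: sum_subtractf)
  have Dsym: "D i j = D j i" if "i < n" "j < n" for i j
    using sym[OF that] unfolding D_def Ystar_def by auto
  have Dcol: "(\<Sum>i<n. D i j) = 0" if "j < n" for j
    using Drow[OF that] Dsym that by (metis (no_types, lifting) lessThan_iff sum.cong)
  have Ddiag: "D i i = 0" if "i < n" for i using diag[OF that] unfolding D_def Ystar_def by simp
  have Eij: "D i j * EHH i j = D i j * (\<mu> (\<sigma> i) \<bullet> \<mu> (\<sigma> j))" if "i < n" "j < n" for i j
  proof (cases "i = j")
    case True then show ?thesis using Ddiag that by simp
  next
    case False
    have "EHH i j = \<mu> (\<sigma> i) \<bullet> \<mu> (\<sigma> j)" unfolding EHH_def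
      by (rule EHH_offdiag[OF A(1) A(8)]) (use that False A(9) in auto)
    then show ?thesis by simp
  qed
  have S4e: "S4 = (\<Sum>i<n. \<Sum>j<n. D i j * (\<mu> (\<sigma> i) \<bullet> \<mu> (\<sigma> j)))"
    unfolding S4_def mat_inner_def using Eij by (intro sum.cong) auto
  have distexp: "(Dab (\<sigma> i) (\<sigma> j))\<^sup>2 = \<mu> (\<sigma> i) \<bullet> \<mu> (\<sigma> i) + \<mu> (\<sigma> j) \<bullet> \<mu> (\<sigma> j) - 2 * (\<mu> (\<sigma> i) \<bullet> \<mu> (\<sigma> j))" for i j
    unfolding Dab_def dist_norm power2_norm_eq_inner by (simp add: inner_diff_left inner_diff_right inner_commute)
  have t1: "(\<Sum>i<n. \<Sum>j<n. D i j * (\<mu> (\<sigma> i) \<bullet> \<mu> (\<sigma> i))) = 0"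
    using Drow by (simp add: sum_distrib_right[symmetric])
  have t2: "(\<Sum>i<n. \<Sum>j<n. D i j * (\<mu> (\<sigma> j) \<bullet> \<mu> (\<sigma> j))) = 0"
    using Dcol by (subst sum.swap) (simp add: sum_distrib_right[symmetric])
  have full: "(\<Sum>i<n. \<Sum>j<n. D i j * (Dab (\<sigma> i) (\<sigma> j))\<^sup>2) = -2 * S4"
  proof -
    have "(\<Sum>i<n. \<Sum>j<n. D i j * (Dab (\<sigma> i) (\<sigma> j))\<^sup>2)
      = (\<Sum>i<n. \<Sum>j<n. D i j * (\<mu> (\<sigma> i) \<bullet> \<mu> (\<sigma> i))) + (\<Sum>i<n. \<Sum>j<n. D i j * (\<mu> (\<sigma> j) \<bullet> \<mu> (\<sigma> j)))
        - 2 * (\<Sum>i<n. \<Sum>j<n. D i j * (\<mu> (\<sigma> i) \<bullet> \<mu> (\<sigma> j)))"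
      unfolding distexp by (simp add: algebra_simps sum.distrib sum_subtractf sum_distrib_left)
    then show ?thesis using t1 t2 S4e by simp
  qed
  have part: "(\<Sum>i<n. \<Sum>j<n. D i j * (Dab (\<sigma> i) (\<sigma> j))\<^sup>2) = (\<Sum>a<k. \<Sum>b<k. T a b * (Dab a b)\<^sup>2)"
    unfolding sum_partition2[OF A(5)] T_def by (simp add: sum_distrib_right)
  have offd: "(\<Sum>b<k. T a b * (Dab a b)\<^sup>2) = (\<Sum>b\<in>{b. b < k \<and> b \<noteq> a}. T a b * (Dab a b)\<^sup>2)" for a
    by (rule sum.mono_neutral_cong_right) (auto simp: Dab_def)
  have eq: "S4 = - (1/2) * X"
    using full part offd unfolding X_def by simp
  define w where "w = (\<lambda>i j. if \<sigma> i = \<sigma> j then 0 else 1::real)"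
  have absD: "\<bar>D i j\<bar> = D i j * (2 * w i j - 1)" if "i < n" "j < n" for i j
    using nonneg[OF that] le1[OF that] unfolding D_def Ystar_def w_def by auto
  have gam: "\<gamma> = 2 * (\<Sum>i<n. \<Sum>j<n. D i j * w i j)"
  proof -
    have "\<gamma> = (\<Sum>i<n. \<Sum>j<n. 2 * (D i j * w i j) - D i j)"
      unfolding \<gamma>_def using absD by (intro sum.cong) (auto simp: algebra_simps)
    also have "\<dots> = 2 * (\<Sum>i<n. \<Sum>j<n. D i j * w i j) - (\<Sum>i<n. \<Sum>j<n. D i j)"
      by (simp add: sum_subtractf sum_distrib_left)
    finally show ?thesis using Drow by simp
  qed
  have Tsum: "(\<Sum>i<n. \<Sum>j<n. D i j * w i j) = (\<Sum>a<k. \<Sum>b\<in>{b. b < k \<and> b \<noteq> a}. T a b)"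
  proof -
    have "(\<Sum>i<n. \<Sum>j<n. D i j * w i j) = (\<Sum>a<k. \<Sum>b<k. T a b * (if a = b then 0 else 1))"
      unfolding sum_partition2[OF A(5)] T_def w_def by (simp add: sum_distrib_right)
    also have "\<dots> = (\<Sum>a<k. \<Sum>b\<in>{b. b < k \<and> b \<noteq> a}. T a b)"
      proof (rule sum.cong[OF refl])
      fix a show "(\<Sum>b<k. T a b * (if a = b then 0 else 1)) = (\<Sum>b\<in>{b. b < k \<and> b \<noteq> a}. T a b)"
        by (rule sum.mono_neutral_cong_right) auto
    qed
    finally show ?thesis .
  qed
  have Tnn: "0 \<le> T a b" if "a \<noteq> b" for a b
    unfolding T_def D_def Ystar_def using that nonneg by (auto intro!: sum_nonneg)
  have fin: "finite {Dab a b | a b. a < k \<and> b < k \<and> a \<noteq> b}"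
  proof -
    have "{Dab a b | a b. a < k \<and> b < k \<and> a \<noteq> b} \<subseteq> (\<lambda>(a,b). Dab a b) ` ({..<k} \<times> {..<k})" by auto
    then show ?thesis by (rule finite_subset) auto
  qed
  have ne: "{Dab a b | a b. a < k \<and> b < k \<and> a \<noteq> b} \<noteq> {}"
  proof -
    have "Dab 0 1 \<in> {Dab a b | a b. a < k \<and> b < k \<and> a \<noteq> b}" using A(3) by force
    then show ?thesis by blast
  qed
  have Dle: "Delta \<le> Dab a b" if "a < k" "b < k" "a \<noteq> b" for a b
    unfolding Delta_def using fin that by (intro Min_le) auto
  have D0: "0 \<le> Delta" unfolding Delta_def using fin ne by (subst Min_ge_iff) (auto simp: Dab_def)
  have "Delta\<^sup>2 * (\<Sum>a<k. \<Sum>b\<in>{b. b < k \<and> b \<noteq> a}. T a b) \<le> X"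
    unfolding X_def sum_distrib_left
  proof (intro sum_mono)
    fix a b assume "a \<in> {..<k}" "b \<in> {b. b < k \<and> b \<noteq> a}"
    then have "Delta\<^sup>2 \<le> (Dab a b)\<^sup>2" using Dle D0 by (auto intro!: power_mono)
    then show "Delta\<^sup>2 * T a b \<le> T a b * (Dab a b)\<^sup>2"
      using Tnn[of a b] \<open>b \<in> _\<close> by (simp add: mult.commute mult_left_mono)
  qed
  then have ineq: "- (1/2) * X \<le> - (1/4) * Delta\<^sup>2 * \<gamma>"
    using gam Tsum by simp
  have main: "S4 = - (1/2) * X \<and> - (1/2) * X \<le> - (1/4) * Delta\<^sup>2 * \<gamma>" using eq ineq by simp
  show ?thesis unfolding Let_def using main
    unfolding Ystar_def D_def \<gamma>_def EHH_def S4_def T_def Dab_def Delta_def X_def .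
qed

end
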